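(* Fix integers $m\in\mathbb{N}$ and $j$ with $m\le j\le 2m$. Let $\mathcal{A}_j$ be the set of all tuples $(\alpha_1,\dots,\alpha_j)\in\{1,\dots,2m\}^j$ with $\alpha_1+\cdots+\alpha_j=2m$ such that exactly $2m-j$ of the $\alpha_\nu$ equal $2$ and the remaining $2(j-m)$ of the $\alpha_\nu$ equal $1$; let $\mathcal{A}_j^c$ be the set of tuples $(\alpha_1,\dots,\alpha_j)\in\{1,\dots,2m\}^j$ with $\alpha_1+\cdots+\alpha_j=2m$ that are not in $\mathcal{A}_j$. For such a tuple define $$S_n(\alpha_1,\dots,\alpha_j)=\frac{1}{n^m}\sum_{\substack{(i_1,\dots,i_j)\in\{1,\dots,n\}^j\\ i_1,\dots,i_j\text{ pairwise distinct}}}\cos\Big(\frac{2\pi i_1}{n}\Big)^{\alpha_1}\cdots\cos\Big(\frac{2\pi i_j}{n}\Big)^{\alpha_j}.$$ Then, as $n\to\infty$, for $(\alpha_1,\dots,\alpha_j)\in\mathcal{A}_j$, $$S_n(\alpha_1,\dots,\alpha_j)=(-1)^{j-m}\frac{(2(j-m))!}{2^j\,(j-m)!}\Big(1+\mathcal{O}\Big(\frac1n\Big)\Big),$$ and for $(\alpha_1,\dots,\alpha_j)\in\mathcal{A}_j^c$, $$S_n(\alpha_1,\dots,\alpha_j)=\mathcal{O}\Big(\frac1n\Big).$$ *)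

theory Defs
  imports Complex_Main "HOL-Library.Landau_Symbols"
begin

text \<open>Tuples (alpha_1,...,alpha_j) are represented as lists of length j (list index k
  corresponds to alpha_(k+1)).\<close>

definition adm_tuples :: "nat \<Rightarrow> nat \<Rightarrow> nat list set" where
  "adm_tuples m j = {al. length al = j \<and> set al \<subseteq> {1..2*m} \<and> sum_list al = 2*m}"

definition tuples_A :: "nat \<Rightarrow> nat \<Rightarrow> nat list set" where
  "tuples_A m j = {al \<in> adm_tuples m j.
      length (filter (\<lambda>a. a = 2) al) = 2*m - j \<and>
      length (filter (\<lambda>a. a = 1) al) = 2*(j - m)}"

definition tuples_Ac :: "nat \<Rightarrow> nat \<Rightarrow> nat list set" where
  "tuples_Ac m j = adm_tuples m j - tuples_A m j"

definition S :: "nat \<Rightarrow> nat \<Rightarrow> nat list \<Rightarrow> real" where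
  "S m n al = (1 / real n ^ m) *
     (\<Sum>is \<in> {is. length is = length al \<and> set is \<subseteq> {1..n} \<and> distinct is}.
        \<Prod>k<length al. cos (2 * pi * real (is ! k) / real n) ^ (al ! k))"

end

theory Submission
  imports Defs
begin

lemma root_sum_zero:
  fixes t :: int and n :: nat
  assumes n: "0 < n" and nd: "\<not> int n dvd t"
  shows "(\<Sum>i\<in>{1..n}. cis (2*pi*real i*of_int t/real n)) = 0"
proof -
  define z where "z = cis (2*pi*of_int t/real n)"
  have zi: "cis (2*pi*real i*of_int t/real n) = z^i" for i
    unfolding z_def DeMoivre by (simp add: mult_ac)
  have zn: "z^n = 1"
  proof -
    have "z^n = cis (2*pi*of_int t)" unfolding z_def DeMoivre using n by (simp add: field_simps)
    also have "\<dots> = 1" by (simp add: mult.assoc[symmetric])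
    finally show ?thesis .
  qed
  have z1: "z \<noteq> 1"
  proof
    assume "z = 1"
    then have "cos (2*pi*of_int t/real n) = 1" unfolding z_def by (metis Re_complex_of_real cis.sel(1) one_complex.sel(1))
    then obtain k :: int where k: "2*pi*of_int t/real n = of_int k * 2 * pi" using cos_one_2pi_int by blast
    then have "of_int t = real n * of_int k" using n by (simp add: field_simps)
    then have "t = int n * k" by (metis of_int_eq_iff of_int_mult of_int_of_nat_eq)
    then show False using nd by simp
  qed
  have "(\<Sum>i\<in>{1..n}. z^i) = (\<Sum>i<n. z^i)"
  proof -
    have "(\<Sum>i\<in>{1..n}. z^i) = (\<Sum>i\<in>{..n}. z^i) - 1"
      by (simp add: sum.atLeast1_atMost_eq atMost_atLeast0 sum.atLeast_Suc_atMost)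
    also have "\<dots> = (\<Sum>i<n. z^i)" using zn by (simp add: lessThan_Suc_atMost[symmetric])
    finally show ?thesis .
  qed
  also have "\<dots> = 0" using z1 zn by (simp add: geometric_sum)
  finally show ?thesis by (simp add: zi)
qed

lemma cos_cis: "complex_of_real (cos x) = (cis x + cis (-x)) / 2"
  by (simp add: complex_eq_iff)

lemma cis_pow_pair: "cis x ^ k * cis (-x) ^ (a-k) = cis (x * of_int (2*int k - int a))" if "k \<le> a"
  using that by (simp add: DeMoivre cis_mult algebra_simps of_nat_diff)

lemma root_sum_gen:
  fixes t :: int and n :: nat
  assumes n: "0 < n" and tb: "\<bar>t\<bar> < int n"
  shows "(\<Sum>i\<in>{1..n}. cis (2*pi*real i/real n * of_int t)) = (if t = 0 then of_nat n else 0)"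
proof (cases "t = 0")
  case True then show ?thesis by simp
next
  case False
  have "\<not> int n dvd t"
  proof
    assume "int n dvd t" then obtain q where "t = int n * q" by auto
    with False tb show False
      by (metis abs_mult abs_of_nat mult.right_neutral mult_zero_right not_le
          zero_less_abs_iff zero_less_mult_iff int_one_le_iff_zero_less mult_left_mono of_nat_0_le_iff)
  qed
  from root_sum_zero[OF n this] False show ?thesis by (simp add: mult_ac)
qed

lemma cos_power_sum:
  fixes n a :: nat
  assumes "a < n"
  shows "(\<Sum>i\<in>{1..n}. cos (2*pi*real i/real n) ^ a) =
     real n * (\<Sum>k\<le>a. if 2*k = a then real (a choose k) else 0) / 2^a"
proof -
  have n: "0 < n" using assms by simp
  let ?x = "\<lambda>i::nat. 2*pi*real i/real n"
  have "complex_of_real (\<Sum>i\<in>{1..n}. cos (?x i) ^ a) =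
        (\<Sum>i\<in>{1..n}. ((cis (?x i) + cis (-?x i)) / 2) ^ a)"
    by (simp add: cos_cis)
  also have "\<dots> = (\<Sum>i\<in>{1..n}. (\<Sum>k\<le>a. of_nat (a choose k) * cis (?x i * of_int (2*int k - int a))) / 2^a)"
    by (intro sum.cong refl) (simp add: power_divide binomial_ring mult.assoc cis_pow_pair)
  also have "\<dots> = (\<Sum>k\<le>a. of_nat (a choose k) * (\<Sum>i\<in>{1..n}. cis (?x i * of_int (2*int k - int a)))) / 2^a"
    by (simp add: sum_divide_distrib[symmetric] sum_distrib_left) (rule sum.swap)
  also have "\<dots> = (\<Sum>k\<le>a. of_nat (a choose k) * (if 2*int k - int a = 0 then of_nat n else 0)) / 2^a"
    using assms n by (intro arg_cong2[where f="(/)"] sum.cong refl arg_cong2[where f="(*)"] root_sum_gen) auto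
  also have "\<dots> = complex_of_real (real n * (\<Sum>k\<le>a. if 2*k = a then real (a choose k) else 0) / 2^a)"
    proof -
    have e: "(int k * 2 = int a) = (k * 2 = a)" for k by linarith
    show ?thesis by (simp add: sum_distrib_left mult_ac if_distrib e cong: if_cong)
  qed
  finally show ?thesis using of_real_eq_iff by blast
qed

lemma cos_power_sum_odd: "odd a \<Longrightarrow> a < n \<Longrightarrow> (\<Sum>i\<in>{1..n}. cos (2*pi*real i/real n) ^ a) = 0"
  by (subst cos_power_sum) (auto intro!: sum.neutral)

lemma cos_power_sum_2: "2 < n \<Longrightarrow> (\<Sum>i\<in>{1..n}. cos (2*pi*real i/real n) ^ 2) = real n / 2"
proof -
  assume "2 < n"
  then have "(\<Sum>i\<in>{1..n}. cos (2*pi*real i/real n) ^ 2) = real n * (\<Sum>k\<le>2. if 2*k = 2 then real (2 choose k) else 0) / 2^2"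
    by (rule cos_power_sum)
  also have "(\<Sum>k\<le>(2::nat). if 2*k = 2 then real (2 choose k) else 0) = 2"
    by (simp add: numeral_2_eq_2)
  finally show ?thesis by simp
qed

lemma cos_power_sum_bound: "\<bar>\<Sum>i\<in>{1..n}. cos (2*pi*real i/real n) ^ a\<bar> \<le> real n"
proof -
  have "\<bar>\<Sum>i\<in>{1..n}. cos (2*pi*real i/real n) ^ a\<bar> \<le> (\<Sum>i\<in>{1..n}. \<bar>cos (2*pi*real i/real n) ^ a\<bar>)"
    by (rule sum_abs)
  also have "\<dots> \<le> (\<Sum>i\<in>{1..n}. 1)"
    by (intro sum_mono) (simp add: power_abs power_le_one)
  finally show ?thesis by simp
qed

definition DD :: "(nat \<Rightarrow> real) \<Rightarrow> nat set \<Rightarrow> nat list \<Rightarrow> real" where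
  "DD f A al = (\<Sum>is \<in> {is. length is = length al \<and> set is \<subseteq> A \<and> distinct is}.
        \<Prod>k<length al. f (is ! k) ^ (al ! k))"

lemma DD_Nil: "DD f A [] = 1"
proof -
  have "{is. length is = 0 \<and> set is \<subseteq> A \<and> distinct is} = {[]}" by auto
  then show ?thesis unfolding DD_def by simp
qed

lemma dist_lists_Suc:
  "{is. length is = Suc l \<and> set is \<subseteq> A \<and> distinct is} =
   (\<lambda>(is,x). is @ [x]) ` (SIGMA is:{is. length is = l \<and> set is \<subseteq> A \<and> distinct is}. A - set is)"
  by (auto simp: length_Suc_conv_rev image_iff)

lemma DD_snoc:
  assumes fin: "finite A"
  shows "DD f A (bl @ [a]) = (\<Sum>x\<in>A. f x ^ a) * DD f A bl - (\<Sum>k<length bl. DD f A (bl[k := bl ! k + a]))"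
proof -
  define l where "l = length bl"
  define T where "T = {is. length is = l \<and> set is \<subseteq> A \<and> distinct is}"
  define P where "P is = (\<Prod>k<l. f (is ! k) ^ (bl ! k))" for "is"
  have finT: "finite T" unfolding T_def
    by (rule finite_subset[OF _ finite_lists_length_eq[OF fin, of l]]) auto
  have inj: "inj_on (\<lambda>(is,x). is @ [x]) (SIGMA is:T. A - set is)"
    by (auto simp: inj_on_def)
  have "DD f A (bl @ [a]) = (\<Sum>y\<in>(\<lambda>(is,x). is @ [x]) ` (SIGMA is:T. A - set is).
        \<Prod>k<Suc l. f (y ! k) ^ ((bl @ [a]) ! k))"
    unfolding DD_def T_def l_def by (simp add: dist_lists_Suc)
  also have "\<dots> = (\<Sum>(is,x)\<in>(SIGMA is:T. A - set is). \<Prod>k<Suc l. f ((is @ [x]) ! k) ^ ((bl @ [a]) ! k))"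
    by (subst sum.reindex[OF inj]) (simp add: case_prod_unfold)
  also have "\<dots> = (\<Sum>is\<in>T. \<Sum>x\<in>A - set is. \<Prod>k<Suc l. f ((is @ [x]) ! k) ^ ((bl @ [a]) ! k))"
    by (rule sum.Sigma[symmetric]) (use finT fin in auto)
  also have "\<dots> = (\<Sum>is\<in>T. \<Sum>x\<in>A - set is. P is * f x ^ a)"
  proof (intro sum.cong refl)
    fix "is" x assume "is \<in> T"
    then have li: "length is = l" by (simp add: T_def)
    have "(\<Prod>k<l. f ((is @ [x]) ! k) ^ ((bl @ [a]) ! k)) = P is"
      unfolding P_def by (intro prod.cong refl) (simp add: nth_append li l_def)
    then show "(\<Prod>k<Suc l. f ((is @ [x]) ! k) ^ ((bl @ [a]) ! k)) = P is * f x ^ a"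
      by (simp add: nth_append li l_def)
  qed
  also have "\<dots> = (\<Sum>is\<in>T. P is * ((\<Sum>x\<in>A. f x ^ a) - (\<Sum>k<l. f (is ! k) ^ a)))"
  proof (intro sum.cong refl)
    fix "is" assume "is \<in> T"
    then have li: "length is = l" and sub: "set is \<subseteq> A" and d: "distinct is" by (auto simp: T_def)
    have "(\<Sum>x\<in>set is. f x ^ a) = (\<Sum>k<l. f (is ! k) ^ a)"
      using d li by (simp add: sum.distinct_set_conv_list sum_list_sum_nth atLeast0LessThan)
    then show "(\<Sum>x\<in>A - set is. P is * f x ^ a) = P is * ((\<Sum>x\<in>A. f x ^ a) - (\<Sum>k<l. f (is ! k) ^ a))"
      by (simp add: sum_distrib_left[symmetric] sum_diff[OF fin sub])
  qed
  also have "\<dots> = (\<Sum>x\<in>A. f x ^ a) * (\<Sum>is\<in>T. P is) - (\<Sum>k<l. \<Sum>is\<in>T. P is * f (is ! k) ^ a)"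
  proof -
    have g: "(\<Sum>is\<in>T. P is * (c - Q is)) = c * sum P T - (\<Sum>is\<in>T. P is * Q is)" for c :: real and Q
      by (simp add: right_diff_distrib sum_subtractf sum_distrib_left mult.commute)
    show ?thesis unfolding g by (simp add: sum_distrib_left) (rule sum.swap)
  qed
  also have "(\<Sum>is\<in>T. P is) = DD f A bl"
    unfolding DD_def T_def P_def l_def by simp
  also have "(\<Sum>k<l. \<Sum>is\<in>T. P is * f (is ! k) ^ a) = (\<Sum>k<l. DD f A (bl[k := bl ! k + a]))"
  proof (intro sum.cong refl)
    fix k assume "k \<in> {..<l}"
    then have k: "k < l" by simp
    have "P is * f (is ! k) ^ a = (\<Prod>k'<l. f (is ! k') ^ (bl[k := bl ! k + a] ! k'))" for "is"
    proof -
      have "(\<Prod>k'<l. f (is ! k') ^ (bl[k := bl ! k + a] ! k')) =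
            (\<Prod>k'<l. f (is ! k') ^ (bl ! k') * (if k' = k then f (is ! k') ^ a else 1))"
        using k by (intro prod.cong refl) (auto simp: l_def nth_list_update power_add)
      also have "\<dots> = P is * f (is ! k) ^ a"
        using k by (simp add: prod.distrib P_def prod.delta)
      finally show ?thesis by simp
    qed
    then show "(\<Sum>is\<in>T. P is * f (is ! k) ^ a) = DD f A (bl[k := bl ! k + a])"
      unfolding DD_def T_def l_def by simp
  qed
  finally show ?thesis by (simp add: l_def)
qed

fun M :: "nat \<Rightarrow> real" where
  "M 0 = 1" | "M (Suc 0) = 0" | "M (Suc (Suc k)) = - real (Suc k) * M k"

definition c1 :: "nat list \<Rightarrow> nat" where "c1 al = length (filter (\<lambda>x. x = 1) al)"

definition L :: "nat list \<Rightarrow> real" where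
  "L al = (if set al \<subseteq> {1,2} then M (c1 al) / 2 ^ (sum_list al div 2) else 0)"

lemma M_rec: "M (Suc c) + real c * M (c - 1) = 0"
  by (cases c) (auto simp: algebra_simps)

lemma M_even_mult: "M (2*t) * (fact t * 2^t) = (-1)^t * fact (2*t)"
proof (induction t)
  case 0 then show ?case by simp
next
  case (Suc t)
  have f1: "(fact (2*Suc t) :: real) = real (2*t+2) * real (2*t+1) * fact (2*t)"
    by (simp add: numeral_2_eq_2 fact_Suc)
  have f2: "(fact (Suc t) :: real) = real (t+1) * fact t" by (simp add: fact_Suc)
  have m: "M (2 * Suc t) = - real (2*t+1) * M (2*t)"
    by (simp add: numeral_2_eq_2)
  have "M (2 * Suc t) * (fact (Suc t) * 2^Suc t) = - real (2*t+1) * (2 * real (t+1)) * (M (2*t) * (fact t * 2^t))"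
    unfolding m f2 by (simp add: algebra_simps)
  also have "\<dots> = (-1)^Suc t * fact (2*Suc t)"
    unfolding Suc.IH f1 by (simp add: algebra_simps)
  finally show ?case .
qed

lemma M_even: "M (2*t) = (-1)^t * fact (2*t) / (fact t * 2^t)"
  using M_even_mult[of t] by (simp add: field_simps)

lemma L_big: "x \<in> set al \<Longrightarrow> 3 \<le> x \<Longrightarrow> L al = 0"
  unfolding L_def by auto

lemma L_snoc2: "L (bl @ [2]) = L bl / 2"
  by (simp add: L_def c1_def)

lemma filter_upd:
  "k < length xs \<Longrightarrow> length (filter P (xs[k := x])) + (if P (xs ! k) then 1 else 0)
     = length (filter P xs) + (if P x then 1 else 0)"
proof (induction xs arbitrary: k)
  case Nil then show ?case by simp
next
  case (Cons y ys) then show ?case by (cases k) auto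
qed

lemma L_one:
  assumes pos: "\<forall>x\<in>set bl. 1 \<le> x"
  shows "L (bl @ [1]) + (\<Sum>k<length bl. L (bl[k := bl ! k + 1])) = 0"
proof (cases "set bl \<subseteq> {1,2}")
  case True
  define c where "c = c1 bl"
  define s where "s = sum_list bl"
  have each: "L (bl[k := bl ! k + 1]) = (if bl ! k = 1 then M (c - 1) / 2 ^ ((s+1) div 2) else 0)"
    if k: "k < length bl" for k
  proof (cases "bl ! k = 1")
    case True
    have sub: "set (bl[k := 2]) \<subseteq> {1,2}"
      using \<open>set bl \<subseteq> {1,2}\<close> by (meson insertCI set_update_subsetI)
    have "c1 (bl[k := 2]) + 1 = c1 bl" using filter_upd[OF k, of "\<lambda>x. x = 1" 2] True
      by (simp add: c1_def)
    moreover have "sum_list (bl[k := 2]) = s + 1"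
      using k True by (simp add: sum_list_update s_def)
    ultimately have e1: "c1 (bl[k := 2]) = c - 1" and e2: "sum_list (bl[k := 2]) = s + 1"
      by (auto simp: c_def)
    have eq: "bl[k := bl ! k + 1] = bl[k := 2]" using True by (simp add: numeral_2_eq_2)
    show ?thesis unfolding eq L_def e1 e2 using True sub by simp
  next
    case False
    then have "bl ! k = 2" using True k nth_mem by fastforce
    moreover have "L (bl[k := bl ! k + 1]) = 0" using k \<open>bl ! k = 2\<close>
      by (intro L_big[of 3]) (auto simp: set_update_memI)
    ultimately show ?thesis by simp
  qed
  have "(\<Sum>k<length bl. L (bl[k := bl ! k + 1])) =
        (\<Sum>k<length bl. if bl ! k = 1 then M (c - 1) / 2 ^ ((s+1) div 2) else 0)"
    by (intro sum.cong refl each) simp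
  also have "\<dots> = real (card {k. k < length bl \<and> bl ! k = 1}) * (M (c - 1) / 2 ^ ((s+1) div 2))"
    by (simp add: sum.If_cases Int_def lessThan_def conj_commute)
  also have "card {k. k < length bl \<and> bl ! k = 1} = c"
    by (simp add: c_def c1_def length_filter_conv_card)
  finally have 1: "(\<Sum>k<length bl. L (bl[k := bl ! k + 1])) = real c * M (c - 1) / 2 ^ ((s+1) div 2)"
    by simp
  have 2: "L (bl @ [1]) = M (Suc c) / 2 ^ ((s+1) div 2)"
    using True by (simp add: L_def c_def c1_def s_def)
  show ?thesis unfolding 1 2 using M_rec[of c] by (simp add: add_divide_distrib[symmetric])
next
  case False
  then obtain p where p: "p < length bl" "bl ! p \<notin> {1,2}"
    by (metis in_set_conv_nth subsetI)
  then have p3: "3 \<le> bl ! p" using pos nth_mem by fastforce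
  have "L (bl @ [1]) = 0" using False by (simp add: L_def)
  moreover have "L (bl[k := bl ! k + 1]) = 0" if "k < length bl" for k
  proof (cases "k = p")
    case True
    then show ?thesis using p p3 by (intro L_big[of "bl ! p + 1"]) (auto simp: set_update_memI)
  next
    case False
    then have "bl[k := bl ! k + 1] ! p = bl ! p" by simp
    then show ?thesis using p p3 by (intro L_big[of "bl ! p"]) (metis length_list_update nth_mem)
  qed
  ultimately show ?thesis by simp
qed

definition Dn :: "nat \<Rightarrow> nat list \<Rightarrow> real" where
  "Dn n al = DD (\<lambda>i. cos (2*pi*real i/real n)) {1..n} al"

definition pa :: "nat \<Rightarrow> nat \<Rightarrow> real" where
  "pa n a = (\<Sum>i\<in>{1..n}. cos (2*pi*real i/real n) ^ a)"

lemma Dn_snoc: "Dn n (bl @ [a]) = pa n a * Dn n bl - (\<Sum>k<length bl. Dn n (bl[k := bl ! k + a]))"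
  unfolding Dn_def pa_def by (rule DD_snoc) simp

lemma bigo_ev_eq:
  assumes "eventually (\<lambda>x. f x = g x) F" "g \<in> O[F](h)"
  shows "f \<in> O[F](h)"
proof -
  from assms(2) obtain c where c: "c > 0" "eventually (\<lambda>x. norm (g x) \<le> c * norm (h x)) F"
    by (elim landau_o.bigE)
  from c(2) assms(1) have "eventually (\<lambda>x. norm (f x) \<le> c * norm (h x)) F"
    by eventually_elim simp
  then show ?thesis by (rule landau_o.bigI[OF c(1)])
qed

lemma pa_bigo: "(\<lambda>n. pa n a) \<in> O(\<lambda>n. real n)"
proof (intro bigoI[of _ 1] always_eventually allI)
  fix n show "norm (pa n a) \<le> 1 * norm (real n)"
    using cos_power_sum_bound[of n a] unfolding pa_def by simp
qed

lemma pow_bigo: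
  assumes "d \<le> e"
  shows "(\<lambda>n::nat. real n ^ d) \<in> O(\<lambda>n. real n ^ e)"
proof (intro bigoI[of _ 1])
  show "\<forall>\<^sub>F x in at_top. norm (real x ^ d) \<le> 1 * norm (real x ^ e)"
    using eventually_ge_at_top[of 1]
    by eventually_elim (auto intro: power_increasing assms)
qed

lemma main:
  "(\<forall>x\<in>set al. 1 \<le> x) \<Longrightarrow> even (sum_list al) \<Longrightarrow>
   (\<lambda>n. Dn n al - L al * real n ^ (sum_list al div 2)) \<in> O(\<lambda>n. real n ^ (sum_list al div 2) / real n)"
proof (induction "length al" arbitrary: al rule: less_induct)
  case less
  show ?case
  proof (cases al rule: rev_exhaust)
    case Nil
    have "Dn n [] = 1" for n unfolding Dn_def by (rule DD_Nil)
    moreover have "L [] = 1" by (simp add: L_def c1_def)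
    ultimately show ?thesis using Nil by simp
  next
    case (snoc bl a)
    define s where "s = sum_list bl"
    define ss where "ss = s + a"
    have a1: "1 \<le> a" and pos: "\<forall>x\<in>set bl. 1 \<le> x" using less.prems snoc by auto
    have ssal: "sum_list al = ss" by (simp add: snoc s_def ss_def)
    have even_ss: "even ss" using less.prems ssal by simp
    define blk where "blk k = bl[k := bl ! k + a]" for k
    have sum_blk: "sum_list (blk k) = ss" if "k < length bl" for k
      using that by (simp add: blk_def sum_list_update s_def ss_def)
    have IHk: "(\<lambda>n. Dn n (blk k) - L (blk k) * real n ^ (ss div 2)) \<in> O(\<lambda>n. real n ^ (ss div 2) / real n)"
      if k: "k < length bl" for k
    proof -
      have "set (blk k) \<subseteq> insert (bl ! k + a) (set bl)" unfolding blk_def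
        by (rule set_update_subset_insert)
      then have "\<forall>x\<in>set (blk k). 1 \<le> x" using pos a1 by auto
      moreover have "length (blk k) < length al" by (simp add: blk_def snoc)
      ultimately show ?thesis using less.hyps[of "blk k"] sum_blk[OF k] even_ss by simp
    qed
    have SUMk: "(\<lambda>n. \<Sum>k<length bl. Dn n (blk k) - L (blk k) * real n ^ (ss div 2)) \<in> O(\<lambda>n. real n ^ (ss div 2) / real n)"
      by (intro big_sum_in_bigo IHk) simp
    have Dal: "Dn n al = pa n a * Dn n bl - (\<Sum>k<length bl. Dn n (blk k))" for n
      unfolding snoc Dn_snoc blk_def ..
    show ?thesis
    proof (cases "odd a")
      case True
      have Lsum: "L al + (\<Sum>k<length bl. L (blk k)) = 0"
      proof (cases "a = 1")
        case True then show ?thesis using L_one[OF pos] by (simp add: snoc blk_def)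
      next
        case False
        with \<open>odd a\<close> a1 have a3: "3 \<le> a" by presburger
        have "L al = 0" using a3 by (intro L_big[of a]) (auto simp: snoc)
        moreover have "(\<Sum>k<length bl. L (blk k)) = 0"
        proof (rule sum.neutral, rule ballI)
          fix k assume "k \<in> {..<length bl}"
          then have k: "k < length bl" by simp
          have mem: "bl ! k + a \<in> set (blk k)" unfolding blk_def using k by (rule set_update_memI)
          show "L (blk k) = 0" by (rule L_big[OF mem]) (use a3 in linarith)
        qed
        ultimately show ?thesis by (simp only: add_0_right)
      qed
      have ev: "eventually (\<lambda>n. Dn n al - L al * real n ^ (sum_list al div 2) =
          - (\<Sum>k<length bl. Dn n (blk k) - L (blk k) * real n ^ (ss div 2))) at_top"
        using eventually_gt_at_top[of a]
      proof eventually_elim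
        case (elim n)
        then have "pa n a = 0" unfolding pa_def using True by (intro cos_power_sum_odd)
        then have "Dn n al = - (\<Sum>k<length bl. Dn n (blk k))" by (simp add: Dal)
        moreover have "L al = - (\<Sum>k<length bl. L (blk k))" using Lsum by linarith
        moreover have "(\<Sum>k<length bl. Dn n (blk k) - L (blk k) * real n ^ (ss div 2)) =
           (\<Sum>k<length bl. Dn n (blk k)) - (\<Sum>k<length bl. L (blk k)) * real n ^ (ss div 2)"
          by (simp add: sum_subtractf sum_distrib_right)
        ultimately show ?case unfolding ssal by (simp only:)
      qed
      show ?thesis unfolding ssal
        by (rule bigo_ev_eq[OF ev[unfolded ssal]]) (rule landau_o.big.uminus_in_iff[THEN iffD2, OF SUMk])
    next
      case False
      then have ev_s: "even s" using even_ss by (simp add: ss_def)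
      have IHbl: "(\<lambda>n. Dn n bl - L bl * real n ^ (s div 2)) \<in> O(\<lambda>n. real n ^ (s div 2) / real n)"
        using less.hyps[of bl] pos ev_s by (simp add: snoc s_def)
      have Lk0: "L (blk k) = 0" if "k < length bl" and "2 \<le> a" for k
      proof -
        have "1 \<le> bl ! k" using pos that(1) nth_mem by blast
        then show ?thesis using that by (intro L_big[of "bl ! k + a"]) (auto simp: blk_def set_update_memI)
      qed
      show ?thesis
      proof (cases "a = 2")
        case True
        have ev: "eventually (\<lambda>n. Dn n al - L al * real n ^ (ss div 2) =
            (real n / 2) * (Dn n bl - L bl * real n ^ (s div 2))
            - (\<Sum>k<length bl. Dn n (blk k) - L (blk k) * real n ^ (ss div 2))) at_top"
          using eventually_gt_at_top[of 2]
        proof eventually_elim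
          case (elim n)
          then have p: "pa n a = real n / 2" unfolding pa_def True by (intro cos_power_sum_2)
          have l: "L al = L bl / 2" unfolding snoc True by (rule L_snoc2)
          have e: "ss div 2 = Suc (s div 2)" using True by (simp add: ss_def)
          have z: "(\<Sum>k<length bl. Dn n (blk k) - L (blk k) * real n ^ (ss div 2)) = (\<Sum>k<length bl. Dn n (blk k))"
            using Lk0 True by (intro sum.cong) auto
          have "Dn n al - L al * real n ^ (ss div 2) = real n / 2 * (Dn n bl - L bl * real n ^ (s div 2)) - (\<Sum>k<length bl. Dn n (blk k))"
            unfolding Dal p l e by (simp add: algebra_simps)
          then show ?case by (simp only: z)
        qed
        have A: "(\<lambda>n. (real n / 2) * (Dn n bl - L bl * real n ^ (s div 2))) \<in> O(\<lambda>n. real n * (real n ^ (s div 2) / real n))"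
          by (intro landau_o.big.mult IHbl) simp
        have eqf: "(\<lambda>n. real n * (real n ^ (s div 2) / real n)) = (\<lambda>n. real n ^ (ss div 2) / real n)"
          using True by (auto simp: ss_def)
        have A': "(\<lambda>n. (real n / 2) * (Dn n bl - L bl * real n ^ (s div 2))) \<in> O(\<lambda>n. real n ^ (ss div 2) / real n)"
          using A unfolding eqf .
        show ?thesis unfolding ssal by (rule bigo_ev_eq[OF ev]) (intro sum_in_bigo A' SUMk)
      next
        case False
        with \<open>\<not> odd a\<close> a1 have a4: "4 \<le> a" by presburger
        have Lal: "L al = 0" using a4 by (intro L_big[of a]) (auto simp: snoc)
        have ev: "Dn n al - L al * real n ^ (ss div 2) =
            pa n a * Dn n bl - (\<Sum>k<length bl. Dn n (blk k) - L (blk k) * real n ^ (ss div 2))" for n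
          using Lk0 a4 Lal by (simp add: Dal)
        have B1: "(\<lambda>n. real n ^ (s div 2) / real n) \<in> O(\<lambda>n. real n ^ (s div 2))"
        proof (intro bigoI[of _ 1] always_eventually allI)
          fix n :: nat
          show "norm (real n ^ (s div 2) / real n) \<le> 1 * norm (real n ^ (s div 2))"
          proof (cases "n = 0")
            case False
            then have "real n ^ (s div 2) \<le> real n ^ (s div 2) * real n"
              using mult_left_mono[of 1 "real n" "real n ^ (s div 2)"] by simp
            then show ?thesis using False by (simp add: divide_le_eq)
          qed simp
        qed
        have B2: "(\<lambda>n. Dn n bl) \<in> O(\<lambda>n. real n ^ (s div 2))"
        proof -
          have "(\<lambda>n. (Dn n bl - L bl * real n ^ (s div 2)) + L bl * real n ^ (s div 2)) \<in> O(\<lambda>n. real n ^ (s div 2))"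
            by (intro sum_in_bigo landau_o.big_trans[OF IHbl B1]) simp
          then show ?thesis by simp
        qed
        have B3: "(\<lambda>n. pa n a * Dn n bl) \<in> O(\<lambda>n. real n * real n ^ (s div 2))"
          by (intro landau_o.big.mult pa_bigo B2)
        have B4: "(\<lambda>n. real n * real n ^ (s div 2)) \<in> O(\<lambda>n. real n ^ (ss div 2) / real n)"
        proof (intro bigoI[of _ 1])
          show "\<forall>\<^sub>F x in at_top. norm (real x * real x ^ (s div 2)) \<le> 1 * norm (real x ^ (ss div 2) / real x)"
            using eventually_ge_at_top[of 1]
          proof eventually_elim
            case (elim n)
            have e: "ss div 2 = Suc (Suc (s div 2)) + (ss div 2 - Suc (Suc (s div 2)))"
              using a4 ev_s even_ss by (simp add: ss_def)
            have "real n * real n ^ (s div 2) \<le> real n * real n ^ (s div 2) * real n ^ (ss div 2 - Suc (Suc (s div 2)))"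
              using elim by (simp add: one_le_power)
            also have "\<dots> = real n ^ (ss div 2) / real n"
              using elim by (subst e) (simp add: power_add field_simps)
            finally show ?case using elim by simp
          qed
        qed
        show ?thesis unfolding ssal ev by (intro sum_in_bigo landau_o.big_trans[OF B3 B4] SUMk)
      qed
    qed
  qed
qed

lemma S_Dn: "S m n al = Dn n al / real n ^ m"
  by (simp add: S_def Dn_def DD_def)

lemma counts12:
  "set xs \<subseteq> {1,2} \<Longrightarrow> sum_list xs = length (filter (\<lambda>x. x = 1) xs) + 2 * length (filter (\<lambda>x. x = 2) xs)
     \<and> length xs = length (filter (\<lambda>x. x = 1) xs) + length (filter (\<lambda>x. x = 2) xs)"
  by (induction xs) auto

lemma A_sub12:
  assumes "al \<in> tuples_A m j" "m \<le> j" "j \<le> 2*m"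
  shows "set al \<subseteq> {1,2}"
proof (rule ccontr)
  assume "\<not> set al \<subseteq> {1,2}"
  then obtain x where x: "x \<in> set al" "x \<noteq> 1" "x \<noteq> 2" by auto
  have len: "length al = j" and f2: "length (filter (\<lambda>a. a = 2) al) = 2*m - j"
    and f1: "length (filter (\<lambda>a. a = 1) al) = 2*(j - m)"
    using assms(1) by (auto simp: tuples_A_def adm_tuples_def)
  have "length (filter (\<lambda>a. a = 2) al) + length (filter (\<lambda>a. \<not> a = 2) al) = length al"
    by (rule sum_length_filter_compl)
  then have g: "length (filter (\<lambda>a. a \<noteq> 2) al) = 2*(j-m)" using len f2 assms(2,3) by simp
  have "x \<in> set (filter (\<lambda>a. a \<noteq> 2) al)" using x by simp
  then have "length (filter (\<lambda>a. a = 1) (filter (\<lambda>a. a \<noteq> 2) al)) < length (filter (\<lambda>a. a \<noteq> 2) al)"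
    using x by (intro length_filter_less) auto
  moreover have "filter (\<lambda>a. a = 1) (filter (\<lambda>a. a \<noteq> 2) al) = filter (\<lambda>a. a = 1) al"
    by (auto simp: filter_filter intro!: filter_cong)
  ultimately show False using f1 g by simp
qed

theorem lemma3:
  fixes m j :: nat
  assumes "m \<ge> 1" and "m \<le> j" and "j \<le> 2*m"
  shows "(\<forall>al \<in> tuples_A m j.
            (\<lambda>n. S m n al /
               ((-1) ^ (j - m) * fact (2*(j - m)) / (2 ^ j * fact (j - m))) - 1)
              \<in> O(\<lambda>n. 1 / real n))
       \<and> (\<forall>al \<in> tuples_Ac m j. (\<lambda>n. S m n al) \<in> O(\<lambda>n. 1 / real n))"
proof (intro conjI ballI)
  define K :: real where "K = (-1) ^ (j - m) * fact (2*(j - m)) / (2 ^ j * fact (j - m))"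
  have Knz: "K \<noteq> 0" by (simp add: K_def)
  have evn: "eventually (\<lambda>n::nat. real n ^ m \<noteq> 0) at_top"
    using eventually_gt_at_top[of 0] by eventually_elim simp
  fix al assume al: "al \<in> tuples_A m j"
  have sub: "set al \<subseteq> {1,2}" using A_sub12[OF al assms(2,3)] .
  have adm: "length al = j" "set al \<subseteq> {1..2*m}" "sum_list al = 2*m"
    and f1: "length (filter (\<lambda>a. a = 1) al) = 2*(j - m)"
    using al by (auto simp: tuples_A_def adm_tuples_def)
  have pos: "\<forall>x\<in>set al. 1 \<le> x" using adm(2) by auto
  have "L al = M (2*(j-m)) / 2 ^ m" using sub f1 adm(3) by (simp add: L_def c1_def)
  also have "\<dots> = K"
  proof -
    have "(2::real) ^ j = 2 ^ (j - m) * 2 ^ m" using assms(2) by (simp add: power_add[symmetric])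
    then show ?thesis unfolding M_even K_def by (simp add: field_simps)
  qed
  finally have LK: "L al = K" .
  have mn: "(\<lambda>n. Dn n al - K * real n ^ m) \<in> O(\<lambda>n. real n ^ m / real n)"
    using main[OF pos] adm(3) LK by simp
  have "(\<lambda>n. (Dn n al - K * real n ^ m) / (K * real n ^ m)) \<in> O(\<lambda>n. (real n ^ m / real n) / (K * real n ^ m))"
  proof -
    have evK: "eventually (\<lambda>n. K * real n ^ m \<noteq> 0) at_top"
      using evn by eventually_elim (simp add: Knz)
    show ?thesis by (rule landau_o.big.divide_right[OF evK mn])
  qed
  also have "(\<lambda>n. (real n ^ m / real n) / (K * real n ^ m)) = (\<lambda>n. inverse K * (1 / real n))"
    by (rule ext) (simp add: field_simps)
  also have "O(\<lambda>n. inverse K * (1 / real n)) = O(\<lambda>n. 1 / real n)"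
    by (rule landau_o.big.cmult) (simp add: Knz)
  finally have X: "(\<lambda>n. (Dn n al - K * real n ^ m) / (K * real n ^ m)) \<in> O(\<lambda>n. 1 / real n)" .
  show "(\<lambda>n. S m n al / ((-1) ^ (j - m) * fact (2*(j - m)) / (2 ^ j * fact (j - m))) - 1) \<in> O(\<lambda>n. 1 / real n)"
    unfolding K_def[symmetric]
  proof (rule bigo_ev_eq[OF _ X])
    show "eventually (\<lambda>n. S m n al / K - 1 = (Dn n al - K * real n ^ m) / (K * real n ^ m)) at_top"
      using evn by eventually_elim (use Knz in \<open>simp add: S_Dn field_simps\<close>)
  qed
next
  have evn: "eventually (\<lambda>n::nat. real n ^ m \<noteq> 0) at_top"
    using eventually_gt_at_top[of 0] by eventually_elim simp
  fix al assume al: "al \<in> tuples_Ac m j"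
  have adm: "length al = j" "set al \<subseteq> {1..2*m}" "sum_list al = 2*m"
    and nA: "al \<notin> tuples_A m j"
    using al by (auto simp: tuples_Ac_def adm_tuples_def)
  have pos: "\<forall>x\<in>set al. 1 \<le> x" using adm(2) by auto
  have nsub: "\<not> set al \<subseteq> {1,2}"
  proof
    assume sub: "set al \<subseteq> {1,2}"
    from counts12[OF sub] adm have
      "length (filter (\<lambda>a. a = 2) al) = 2*m - j" "length (filter (\<lambda>a. a = 1) al) = 2*(j - m)"
      by linarith+
    with al nA show False by (auto simp: tuples_Ac_def tuples_A_def)
  qed
  then have "L al = 0" by (simp add: L_def)
  then have mn: "(\<lambda>n. Dn n al) \<in> O(\<lambda>n. real n ^ m / real n)"
    using main[OF pos] adm(3) by simp
  have "(\<lambda>n. Dn n al / real n ^ m) \<in> O(\<lambda>n. (real n ^ m / real n) / real n ^ m)"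
    by (rule landau_o.big.divide_right[OF evn mn])
  also have "(\<lambda>n. (real n ^ m / real n) / real n ^ m) \<in> O(\<lambda>n. 1 / real n)"
    by (rule bigo_ev_eq[OF _ landau_o.big_refl]) (use evn in \<open>eventually_elim, simp\<close>)
  finally show "(\<lambda>n. S m n al) \<in> O(\<lambda>n. 1 / real n)" by (simp add: S_Dn)
qed

end
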